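(* For any $\bm x \in \Delta_n \setminus \{\bm e_1,\dots,\bm e_n,\tfrac1n\bm e\}$ and any integer $p\geqslant 2$, $$\frac{p}{p-1}\left[\frac{-\ln\|\bm x\|_p}{1-\|\bm x\|_p}\right] - \ln n\left[1 + \frac{1}{D_p}\right] < 0.$$
   Context: For $\bm x \in \mathbb{R}^n_{\geqslant 0}$ and $p\geqslant 1$, $\|\bm x\|_p = (\sum_{i=1}^n x_i^p)^{1/p}$, and $D_p = n^{1-1/p}-1$. $\Delta_n = \{\bm x \in \mathbb{R}^n_{\geqslant 0} : \sum_{i=1}^n x_i = 1\}$, $\bm e_i$ is the $i$-th standard unit vector and $\bm e$ the all-ones vector in $\mathbb{R}^n$. *)

theory Defs
  imports "HOL-Analysis.Analysis"
begin

text \<open>Vectors in R^n are represented as functions nat => real, indexed by {0..<n}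
 (index i corresponds to coordinate i+1 of the paper).\<close>

definition pnorm :: "nat \<Rightarrow> real \<Rightarrow> (nat \<Rightarrow> real) \<Rightarrow> real" where
  "pnorm n p x = (\<Sum>i<n. x i powr p) powr (1 / p)"

definition Dp :: "nat \<Rightarrow> real \<Rightarrow> real" where
  "Dp n p = real n powr (1 - 1 / p) - 1"

definition std_simplex_n :: "nat \<Rightarrow> (nat \<Rightarrow> real) set" where
  "std_simplex_n n = {x. (\<forall>i<n. x i \<ge> 0) \<and> (\<forall>i\<ge>n. x i = 0) \<and> (\<Sum>i<n. x i) = 1}"

definition unitvec :: "nat \<Rightarrow> nat \<Rightarrow> real" where
  "unitvec j = (\<lambda>i. if i = j then 1 else 0)"

definition bary_n :: "nat \<Rightarrow> nat \<Rightarrow> real" where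
  "bary_n n = (\<lambda>i. if i < n then 1 / real n else 0)"

end

theory Submission
  imports Defs
begin

lemma bern_strict:
  fixes h :: real and p :: nat
  assumes "h \<ge> -1" "h \<noteq> 0" "p \<ge> 2"
  shows "1 + real p * h < (1 + h) ^ p"
proof -
  obtain q where q: "p = Suc q" "q \<ge> 1" using assms(3) by (cases p) auto
  have B: "1 + real q * h \<le> (1 + h) ^ q" using Bernoulli_inequality[of h q] assms(1) by simp
  have "(1 + h) * (1 + real q * h) \<le> (1 + h) * (1 + h) ^ q"
    using B assms(1) by (intro mult_left_mono) auto
  moreover have "(1 + h) * (1 + real q * h) = 1 + real p * h + real q * h^2"
    using q by (simp add: algebra_simps power2_eq_square)
  moreover have "real q * h^2 > 0" using q assms(2) by simp
  ultimately show ?thesis using q by simp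
qed

lemma tangent_strict:
  fixes a x :: real and p :: nat
  assumes "a > 0" "x \<ge> 0" "x \<noteq> a" "p \<ge> 2"
  shows "a ^ p + real p * a ^ (p - 1) * (x - a) < x ^ p"
proof -
  define h where "h = x / a - 1"
  have hx: "x = a * (1 + h)" using assms(1) by (simp add: h_def field_simps)
  have h1: "h \<ge> -1" using assms by (simp add: h_def field_simps)
  have h0: "h \<noteq> 0" using assms by (simp add: h_def field_simps)
  have "a ^ p * (1 + real p * h) < a ^ p * (1 + h) ^ p"
    using bern_strict[OF h1 h0 assms(4)] assms(1) by simp
  moreover have "a ^ p * (1 + real p * h) = a ^ p + real p * a ^ (p - 1) * (x - a)"
  proof -
    have "a ^ p = a * a ^ (p - 1)" using assms(4) by (metis Suc_diff_le le_trans one_le_numeral power_Suc diff_Suc_1)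
    then show ?thesis unfolding hx by (simp add: algebra_simps)
  qed
  moreover have "a ^ p * (1 + h) ^ p = x ^ p" unfolding hx by (simp add: power_mult_distrib)
  ultimately show ?thesis by simp
qed

lemma f_mono:
  fixes s t :: real
  assumes "0 < s" "s < t" "t < 1"
  shows "- ln t / (1 - t) < - ln s / (1 - s)"
proof -
  define l where "l = (1 - t) / (1 - s)"
  have l0: "0 < l" "l < 1" using assms by (auto simp: l_def field_simps)
  have "l * (1 - s) = 1 - t" using assms by (simp add: l_def)
  hence tl: "t = l * s + (1 - l)" by (simp add: algebra_simps)
  have A: "ln s - ln t \<le> (s - t) / t" using ln_diff_le[of s t] assms by simp
  have B: "ln 1 - ln t < (1 - t) / t" using ln_diff_less[of 1 t] assms by simp
  have "l * (ln s - ln t) + (1 - l) * (0 - ln t) < l * ((s - t) / t) + (1 - l) * ((1 - t) / t)"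
    using A B l0 by (intro add_le_less_mono mult_left_mono mult_strict_left_mono) auto
  also have "\<dots> = (l * s + (1 - l) - t) / t" using assms by (simp add: field_simps)
  also have "\<dots> = 0" using tl by simp
  finally have "l * ln s - ln t < 0" by (simp add: algebra_simps)
  hence "- ln t < l * (- ln s)" by simp
  hence "- ln t / (1 - t) < l * (- ln s) / (1 - t)" using assms by (simp add: divide_strict_right_mono)
  also have "\<dots> = (- ln s) * (l / (1 - t))" by simp
  also have "l / (1 - t) = 1 / (1 - s)" using assms by (simp add: l_def)
  also have "(- ln s) * (1 / (1 - s)) = - ln s / (1 - s)" by simp
  finally show ?thesis .
qed


theorem lemma1:
  fixes n p :: nat and x :: "nat \<Rightarrow> real"
  assumes "x \<in> std_simplex_n n"
    and "\<forall>j<n. x \<noteq> unitvec j"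
    and "x \<noteq> bary_n n"
    and "p \<ge> 2"
  shows "real p / (real p - 1) * (- ln (pnorm n (real p) x) / (1 - pnorm n (real p) x))
         - ln (real n) * (1 + 1 / Dp n (real p)) < 0"
proof -
  have nn: "\<And>i. i < n \<Longrightarrow> x i \<ge> 0" and zz: "\<And>i. i \<ge> n \<Longrightarrow> x i = 0"
    and s1: "(\<Sum>i<n. x i) = 1" using assms(1) by (auto simp: std_simplex_n_def)
  have xle: "\<And>i. i < n \<Longrightarrow> x i \<le> 1"
  proof -
    fix i assume "i < n"
    then have "x i \<le> (\<Sum>i<n. x i)" using nn by (intro member_le_sum) auto
    then show "x i \<le> 1" using s1 by simp
  qed
  have ex: "\<exists>i<n. 0 < x i \<and> x i < 1"
  proof (rule ccontr)
    assume H: "\<not> ?thesis"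
    obtain j where j: "j < n" "x j \<noteq> 0"
    proof (rule ccontr)
      assume "\<not> thesis"
      then have "\<forall>i<n. x i = 0" using that by blast
      then have "(\<Sum>i<n. x i) = 0" by simp
      then show False using s1 by simp
    qed
    have xj: "x j = 1" using H j nn[of j] xle[of j] by force
    have "x j + (\<Sum>i\<in>{..<n} - {j}. x i) = 1" using s1 j by (simp add: sum.remove)
    then have r0: "(\<Sum>i\<in>{..<n} - {j}. x i) = 0" using xj by simp
    have "x = unitvec j"
    proof
      fix i show "x i = unitvec j i"
      proof (cases "i < n \<and> i \<noteq> j")
        case True
        then have "x i \<le> (\<Sum>i\<in>{..<n} - {j}. x i)" using nn by (intro member_le_sum) auto
        then show ?thesis using True nn[of i] r0 by (simp add: unitvec_def)
      next
        case False
        then show ?thesis using xj zz[of i] by (auto simp: unitvec_def)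
      qed
    qed
    then show False using assms(2) j by blast
  qed
  have n2: "n \<ge> 2"
  proof (rule ccontr)
    assume "\<not> n \<ge> 2"
    then have "n = 0 \<or> n = 1" by auto
    then show False
    proof
      assume "n = 0" then show False using s1 by simp
    next
      assume "n = 1" then show False using ex s1 by auto
    qed
  qed
  have p0: "real p > 0" using assms(4) by simp
  define S where "S = (\<Sum>i<n. x i ^ p)"
  have pw: "\<And>i. i < n \<Longrightarrow> x i powr real p = x i ^ p"
  proof -
    fix i assume "i < n"
    show "x i powr real p = x i ^ p"
    proof (cases "x i = 0")
      case True then show ?thesis using assms(4) by simp
    next
      case False then show ?thesis using nn[OF \<open>i < n\<close>] by (simp add: powr_realpow)
    qed
  qed
  have tdef: "pnorm n (real p) x = S powr (1 / real p)"
    unfolding pnorm_def S_def using pw by simp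
  have S1: "S < 1"
  proof -
    obtain i where i: "i < n" "0 < x i" "x i < 1" using ex by blast
    have "S < (\<Sum>i<n. x i)" unfolding S_def
    proof (rule sum_strict_mono_ex1)
      show "\<forall>k\<in>{..<n}. x k ^ p \<le> x k"
      proof
        fix k assume "k \<in> {..<n}"
        then have "0 \<le> x k" "x k \<le> 1" using nn xle by auto
        then show "x k ^ p \<le> x k" using power_decreasing[of 1 p "x k"] assms(4) by simp
      qed
      show "\<exists>k\<in>{..<n}. x k ^ p < x k"
        using i power_strict_decreasing[of 1 p "x i"] assms(4) by auto
    qed simp
    then show ?thesis using s1 by simp
  qed
  define a where "a = 1 / real n"
  have a0: "a > 0" using n2 by (simp add: a_def)
  have Sgt: "S > real n * a ^ p"
  proof -
    obtain i where i: "i < n" "x i \<noteq> a"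
    proof (rule ccontr)
      assume "\<not> thesis"
      then have "\<forall>i<n. x i = a" using that by blast
      then have "x = bary_n n" using zz by (auto simp: bary_n_def a_def)
      then show False using assms(3) by simp
    qed
    have "(\<Sum>k<n. a ^ p + real p * a ^ (p - 1) * (x k - a)) < S" unfolding S_def
    proof (rule sum_strict_mono_ex1)
      show "\<forall>k\<in>{..<n}. a ^ p + real p * a ^ (p - 1) * (x k - a) \<le> x k ^ p"
      proof
        fix k assume k: "k \<in> {..<n}"
        show "a ^ p + real p * a ^ (p - 1) * (x k - a) \<le> x k ^ p"
        proof (cases "x k = a")
          case True then show ?thesis by simp
        next
          case False then show ?thesis using tangent_strict[OF a0 _ False assms(4)] nn k by force
        qed
      qed
      show "\<exists>k\<in>{..<n}. a ^ p + real p * a ^ (p - 1) * (x k - a) < x k ^ p"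
        using tangent_strict[OF a0 _ i(2) assms(4)] nn i by force
    qed simp
    moreover have "(\<Sum>k<n. a ^ p + real p * a ^ (p - 1) * (x k - a)) = real n * a ^ p"
    proof -
      have "(\<Sum>k<n. a ^ p + real p * a ^ (p - 1) * (x k - a))
          = real n * a ^ p + real p * a ^ (p - 1) * ((\<Sum>k<n. x k) - real n * a)"
        by (simp add: sum.distrib sum_distrib_left[symmetric] sum_subtractf)
      also have "(\<Sum>k<n. x k) - real n * a = 0" using s1 n2 by (simp add: a_def)
      finally show ?thesis by simp
    qed
    ultimately show ?thesis by simp
  qed
  define m where "m = real n powr (1 - 1 / real p)"
  have e1: "1 - 1 / real p > 0" using assms(4) by (simp add: field_simps)
  have m1: "m > 1" unfolding m_def using n2 e1 powr_less_mono[of 0 "1 - 1 / real p" "real n"] by simp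
  have nap: "real n * a ^ p = real n powr (1 - real p)"
    using n2 by (simp add: a_def powr_diff powr_realpow power_one_over)
  have tlow: "pnorm n (real p) x > 1 / m"
  proof -
    have "(real n * a ^ p) powr (1 / real p) < S powr (1 / real p)"
      using Sgt p0 a0 n2 by (intro powr_less_mono2) auto
    moreover have "(real n * a ^ p) powr (1 / real p) = 1 / m"
    proof -
      have "(real n * a ^ p) powr (1 / real p) = real n powr ((1 - real p) * (1 / real p))"
        unfolding nap by (simp add: powr_powr)
      also have "(1 - real p) * (1 / real p) = - (1 - 1 / real p)" using p0 by (simp add: field_simps)
      also have "real n powr (- (1 - 1 / real p)) = 1 / m" unfolding m_def by (subst powr_minus) (simp add: divide_inverse)
      finally show ?thesis .
    qed
    ultimately show ?thesis using tdef by simp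
  qed
  have thi: "pnorm n (real p) x < 1"
  proof -
    have "S \<ge> 0" unfolding S_def using nn by (intro sum_nonneg) auto
    then have "S powr (1 / real p) < 1 powr (1 / real p)" using S1 p0 by (intro powr_less_mono2) auto
    then show ?thesis unfolding tdef by simp
  qed
  have mono: "- ln (pnorm n (real p) x) / (1 - pnorm n (real p) x) < - ln (1 / m) / (1 - 1 / m)"
    using f_mono[OF _ tlow thi] m1 by simp
  have lnm: "ln m = (1 - 1 / real p) * ln (real n)" unfolding m_def using n2 by (simp add: ln_powr)
  have "real p / (real p - 1) * (- ln (1 / m) / (1 - 1 / m)) = ln (real n) * (1 + 1 / Dp n (real p))"
  proof -
    have Dm: "Dp n (real p) = m - 1" by (simp add: Dp_def m_def)
    have "- ln (1 / m) = (1 - 1 / real p) * ln (real n)" using m1 lnm by (simp add: ln_div)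
    moreover have "real p / (real p - 1) * (1 - 1 / real p) = 1" using assms(4) by (simp add: field_simps)
    moreover have "1 / (1 - 1 / m) = 1 + 1 / (m - 1)" using m1 by (simp add: field_simps)
    ultimately show ?thesis unfolding Dm
      by (metis (no_types, lifting) divide_divide_eq_right mult.assoc mult.commute mult_1 times_divide_eq_right)
  qed
  moreover have "real p / (real p - 1) > 0" using assms(4) by simp
  ultimately show ?thesis using mono mult_strict_left_mono by fastforce
qed

end
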